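(* If $L$ is an algebraic lattice, then $\dim_\nabla(L)=\mathrm{cov}(\mathrm{mi}_\Delta(L))$. In particular, for $n<\infty$, $\dim_\nabla(L)=n$ if and only if $n$ is the maximum size of an antichain of $\mathrm{mi}_\Delta(L)$.
   Context: $\mathrm{mi}_\Delta(L)$ is the set of completely meet-irreducible elements of $L$ (elements $m$ having an upper cover $m^*$ such that $z>m$ implies $z\geq m^*$). The complete join-dimension $\dim_\nabla(L)$ is the least cardinal $\kappa$ such that there is a one-to-one map from $L$ into a direct product of $\kappa$ complete chains preserving arbitrary joins. $\mathrm{cov}(P)$ is the least number of chains whose union is the poset $P$. *)

theory Defs
  imports Main
begin

definition compact_el :: "'a::complete_lattice \<Rightarrow> bool" where
  "compact_el x \<longleftrightarrow> (\<forall>S. x \<le> Sup S \<longrightarrow> (\<exists>F\<subseteq>S. finite F \<and> x \<le> Sup F))"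

definition algebraic_lattice :: "'a::complete_lattice itself \<Rightarrow> bool" where
  "algebraic_lattice _ \<longleftrightarrow> (\<forall>x::'a. x = Sup {c. compact_el c \<and> c \<le> x})"

definition mi_Delta :: "'a::complete_lattice set" where
  "mi_Delta = {m. \<exists>ms. m < ms \<and> \<not> (\<exists>z. m < z \<and> z < ms) \<and> (\<forall>z. m < z \<longrightarrow> ms \<le> z)}"

definition is_lub_in :: "('c \<times> 'c) set \<Rightarrow> 'c set \<Rightarrow> 'c set \<Rightarrow> 'c \<Rightarrow> bool" where
  "is_lub_in r A S u \<longleftrightarrow> u \<in> A \<and> (\<forall>s\<in>S. (s, u) \<in> r)
      \<and> (\<forall>v\<in>A. (\<forall>s\<in>S. (s, v) \<in> r) \<longrightarrow> (u, v) \<in> r)"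

definition complete_chain :: "'c set \<Rightarrow> ('c \<times> 'c) set \<Rightarrow> bool" where
  "complete_chain A r \<longleftrightarrow> r \<subseteq> A \<times> A \<and> refl_on A r \<and> antisym r \<and> trans r
      \<and> total_on A r \<and> (\<forall>S\<subseteq>A. \<exists>u. is_lub_in r A S u)"

text \<open>The chains are carried by
  subsets of 'a (the coordinate images of such a map are complete chains of size
  at most |'a|, so this is no restriction).\<close>
definition join_embeds :: "'a::complete_lattice itself \<Rightarrow> 'i set \<Rightarrow> bool" where
  "join_embeds _ I \<longleftrightarrow> (\<exists>(C :: 'i \<Rightarrow> 'a set) (R :: 'i \<Rightarrow> ('a \<times> 'a) set) (f :: 'a \<Rightarrow> 'i \<Rightarrow> 'a).
      (\<forall>i\<in>I. complete_chain (C i) (R i))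
    \<and> (\<forall>x. \<forall>i\<in>I. f x i \<in> C i)
    \<and> (\<forall>x y. (\<forall>i\<in>I. f x i = f y i) \<longrightarrow> x = y)
    \<and> (\<forall>S. \<forall>i\<in>I. is_lub_in (R i) (C i) ((\<lambda>x. f x i) ` S) (f (Sup S) i)))"

text \<open>I realises the complete join-dimension: |I| is the least cardinal of an index
  set admitting such an embedding. (Index sets are taken in 'a set; this suffices
  since the join-dimension is at most |'a|.)\<close>
definition join_dim_is :: "'a::complete_lattice itself \<Rightarrow> 'a set \<Rightarrow> bool" where
  "join_dim_is T I \<longleftrightarrow> join_embeds T I
      \<and> (\<forall>J::'a set. join_embeds T J \<longrightarrow> (card_of I, card_of J) \<in> ordLeq)"

definition chain_cover :: "'a::order set \<Rightarrow> 'i set \<Rightarrow> bool" where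
  "chain_cover P J \<longleftrightarrow> (\<exists>Ch :: 'i \<Rightarrow> 'a set.
      (\<forall>j\<in>J. Ch j \<subseteq> P \<and> Complete_Partial_Order.chain (\<le>) (Ch j)) \<and> P = (\<Union>j\<in>J. Ch j))"

definition cov_is :: "'a::order set \<Rightarrow> 'a set \<Rightarrow> bool" where
  "cov_is P J \<longleftrightarrow> chain_cover P J
      \<and> (\<forall>K::'a set. chain_cover P K \<longrightarrow> (card_of J, card_of K) \<in> ordLeq)"

definition antichain_in :: "'a::order set \<Rightarrow> 'a set \<Rightarrow> bool" where
  "antichain_in P A \<longleftrightarrow> A \<subseteq> P \<and> (\<forall>x\<in>A. \<forall>y\<in>A. x \<le> y \<longrightarrow> x = y)"

end

theory Submission
  imports Defs
begin

lemma fin_chain_Sup_in: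
  fixes F :: "'a::complete_lattice set"
  assumes "finite F" "F \<noteq> {}" "\<forall>x\<in>F. \<forall>y\<in>F. x \<le> y \<or> y \<le> x"
  shows "Sup F \<in> F"
  using assms
proof (induction F rule: finite_induct)
  case empty then show ?case by simp
next
  case (insert a F)
  show ?case
  proof (cases "F = {}")
    case True then show ?thesis by simp
  next
    case False
    with insert have "Sup F \<in> F" by blast
    then have "a \<le> Sup F \<or> Sup F \<le> a" using insert.prems by blast
    then show ?thesis using \<open>Sup F \<in> F\<close>
      by (auto simp: sup.absorb1 sup.absorb2)
  qed
qed

lemma separation:
  fixes x y :: "'a::complete_lattice"
  assumes alg: "algebraic_lattice TYPE('a)" and nle: "\<not> x \<le> y"
  shows "\<exists>m\<in>mi_Delta. y \<le> m \<and> \<not> x \<le> m"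
proof -
  have xs: "x = Sup {c. compact_el c \<and> c \<le> x}" using alg unfolding algebraic_lattice_def by simp
  have "\<exists>c. compact_el c \<and> c \<le> x \<and> \<not> c \<le> y"
  proof (rule ccontr)
    assume "\<not> (\<exists>c. compact_el c \<and> c \<le> x \<and> \<not> c \<le> y)"
    then have "Sup {c. compact_el c \<and> c \<le> x} \<le> y" by (intro Sup_least) auto
    then show False using xs nle by simp
  qed
  then obtain c where c: "compact_el c" "c \<le> x" "\<not> c \<le> y" by blast
  define A where "A = {z. y \<le> z \<and> \<not> c \<le> z}"
  have po: "partial_order_on A (relation_of (\<le>) A)"
  proof -
    have "relation_of (\<le>) A \<subseteq> A \<times> A" unfolding relation_of_def by auto
    moreover have "refl_on A (relation_of (\<le>) A)" unfolding refl_on_def relation_of_def by auto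
    moreover have "trans (relation_of (\<le>) A)" unfolding trans_def relation_of_def
      by (auto intro: order_trans)
    moreover have "antisym (relation_of (\<le>) A)" unfolding antisym_def relation_of_def
      by (auto intro: order_antisym)
    ultimately show ?thesis unfolding partial_order_on_def preorder_on_def by simp
  qed
  have "\<exists>m \<in> A. \<forall>a \<in> A. m \<le> a \<longrightarrow> a = m"
  proof (rule predicate_Zorn[OF po])
    fix C assume C: "C \<in> Chains (relation_of (\<le>) A)"
    then have CA: "C \<subseteq> A" and ch: "\<forall>a\<in>C. \<forall>b\<in>C. a \<le> b \<or> b \<le> a"
      unfolding Chains_def relation_of_def by auto
    show "\<exists>u\<in>A. \<forall>a\<in>C. a \<le> u"
    proof (cases "C = {}")
      case True then show ?thesis using c unfolding A_def by auto
    next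
      case False
      then obtain a0 where "a0 \<in> C" by blast
      have "y \<le> Sup C" using \<open>a0 \<in> C\<close> CA unfolding A_def by (auto intro: order_trans Sup_upper)
      moreover have "\<not> c \<le> Sup C"
      proof
        assume "c \<le> Sup C"
        then obtain F where F: "F \<subseteq> C" "finite F" "c \<le> Sup F"
          using c(1) unfolding compact_el_def by blast
        show False
        proof (cases "F = {}")
          case True then show False using F c(3) by (simp add: bot_unique)
        next
          case False
          then have "Sup F \<in> F" using fin_chain_Sup_in[OF F(2) False] ch F(1) by blast
          then show False using F CA unfolding A_def by auto
        qed
      qed
      ultimately show ?thesis unfolding A_def by (auto intro: Sup_upper)
    qed
  qed
  then obtain m where m: "m \<in> A" "\<forall>a \<in> A. m \<le> a \<longrightarrow> a = m" by blast
  have "m \<in> mi_Delta"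
    unfolding mi_Delta_def
  proof (intro CollectI exI[of _ "sup m c"] conjI)
    have "\<not> c \<le> m" using m unfolding A_def by auto
    then show "m < sup m c" by (simp add: less_le_not_le)
    have up: "sup m c \<le> z" if "m < z" for z
    proof -
      have "z \<notin> A" using m(2) that by auto
      moreover have "y \<le> z" using m(1) that unfolding A_def by auto
      ultimately have "c \<le> z" unfolding A_def by auto
      then show ?thesis using that by auto
    qed
    then show "\<not> (\<exists>z. m < z \<and> z < sup m c)" by (meson leD)
    show "\<forall>z. m < z \<longrightarrow> sup m c \<le> z" using up by blast
  qed
  moreover have "y \<le> m" "\<not> x \<le> m" using m(1) c unfolding A_def by (auto intro: order_trans)
  ultimately show ?thesis by blast
qed

lemma cover_embeds:
  fixes J :: "'i set"
  assumes sep: "\<forall>x y::'a::complete_lattice. \<not> x \<le> y \<longrightarrow> (\<exists>m\<in>mi_Delta. y \<le> m \<and> \<not> x \<le> m)"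
    and cov: "chain_cover (mi_Delta::'a set) J"
  shows "join_embeds TYPE('a) J"
proof -
  obtain Ch :: "'i \<Rightarrow> 'a set" where Ch: "\<forall>j\<in>J. Ch j \<subseteq> mi_Delta \<and> Complete_Partial_Order.chain (\<le>) (Ch j)"
    "mi_Delta = (\<Union>j\<in>J. Ch j)"
    using cov unfolding chain_cover_def by blast
  define r where "r j x = Inf {m \<in> Ch j. x \<le> m}" for j x
  define C where "C j = range (r j)" for j
  define R where "R j = {(a,b). a \<in> C j \<and> b \<in> C j \<and> a \<le> b}" for j
  have key: "r j x \<le> m \<longleftrightarrow> x \<le> m" if "m \<in> Ch j" for j x m
  proof
    assume "r j x \<le> m"
    moreover have "x \<le> r j x" unfolding r_def by (auto intro: Inf_greatest)
    ultimately show "x \<le> m" by (metis order_trans)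
  next
    assume "x \<le> m" then show "r j x \<le> m" unfolding r_def using that by (auto intro: Inf_lower)
  qed
  have ext: "x \<le> r j x" for j x unfolding r_def by (auto intro: Inf_greatest)
  have mono: "r j x \<le> r j y" if "x \<le> y" for j x y
    unfolding r_def using that by (auto intro!: Inf_superset_mono intro: order_trans)
  have idem: "r j (r j x) = r j x" for j x
  proof -
    have "{m \<in> Ch j. r j x \<le> m} = {m \<in> Ch j. x \<le> m}" using key by blast
    then show ?thesis unfolding r_def[of j "r j x"] by (simp add: r_def)
  qed
  have total: "r j x \<le> r j y \<or> r j y \<le> r j x" if "j \<in> J" for j x y
  proof -
    have ch: "\<forall>a\<in>Ch j. \<forall>b\<in>Ch j. a \<le> b \<or> b \<le> a"
      using Ch(1) that unfolding Complete_Partial_Order.chain_def by blast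
    have "{m \<in> Ch j. x \<le> m} \<subseteq> {m \<in> Ch j. y \<le> m} \<or> {m \<in> Ch j. y \<le> m} \<subseteq> {m \<in> Ch j. x \<le> m}"
      using ch by (auto intro: order_trans)
    then show ?thesis unfolding r_def by (auto intro: Inf_superset_mono)
  qed
  have lub: "is_lub_in (R j) (C j) (r j ` S) (r j (Sup S))" for j S
    unfolding is_lub_in_def
  proof (intro conjI ballI impI)
    show "r j (Sup S) \<in> C j" unfolding C_def by simp
    fix s assume "s \<in> r j ` S"
    then show "(s, r j (Sup S)) \<in> R j" unfolding R_def C_def
      by (auto intro!: mono Sup_upper)
  next
    fix v assume v: "v \<in> C j" and ub: "\<forall>s\<in>r j ` S. (s, v) \<in> R j"
    have "Sup S \<le> v" using ub ext unfolding R_def by (auto intro!: Sup_least intro: order_trans)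
    then have "r j (Sup S) \<le> r j v" by (rule mono)
    moreover have "r j v = v" using v idem unfolding C_def by auto
    ultimately show "(r j (Sup S), v) \<in> R j" using v unfolding R_def C_def by auto
  qed
  show ?thesis
    unfolding join_embeds_def
  proof (intro exI[of _ C] exI[of _ R] exI[of _ "\<lambda>x j. r j x"] conjI allI ballI impI)
    fix j assume j: "j \<in> J"
    show "complete_chain (C j) (R j)"
      unfolding complete_chain_def
    proof (intro conjI allI impI)
      show "R j \<subseteq> C j \<times> C j" unfolding R_def by auto
      show "refl_on (C j) (R j)" unfolding refl_on_def R_def by auto
      show "antisym (R j)" unfolding antisym_def R_def by auto
      show "trans (R j)" unfolding trans_def R_def by auto
      show "total_on (C j) (R j)" unfolding total_on_def R_def C_def using total[OF j] by auto
      fix T assume T: "T \<subseteq> C j"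
      have fx: "r j t = t" if "t \<in> T" for t using T that idem unfolding C_def by auto
      have "r j ` T = T" using fx by (simp add: image_cong)
      then show "\<exists>u. is_lub_in (R j) (C j) T u" using lub[of j T] by metis
    qed
  next
    fix x j show "r j x \<in> C j" unfolding C_def by simp
  next
    fix S j show "is_lub_in (R j) (C j) ((\<lambda>x. r j x) ` S) (r j (Sup S))" using lub by simp
  next
    fix x y assume eq: "\<forall>j\<in>J. r j x = r j y"
    show "x = y"
    proof (rule ccontr)
      assume "x \<noteq> y"
      then have "\<not> x \<le> y \<or> \<not> y \<le> x" by auto
      then obtain a b where ab: "\<not> a \<le> b" "\<forall>j\<in>J. r j a = r j b"
        using eq by metis
      obtain m where m: "m \<in> mi_Delta" "b \<le> m" "\<not> a \<le> m" using sep ab(1) by blast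
      then obtain j where j: "j \<in> J" "m \<in> Ch j" using Ch(2) by blast
      have "r j b \<le> m" using key[OF j(2)] m by simp
      moreover have "\<not> r j a \<le> m" using key[OF j(2)] m by simp
      ultimately show False using ab(2) j(1) by metis
    qed
  qed
qed

lemma embeds_cover:
  fixes I :: "'i set"
  assumes emb: "join_embeds TYPE('a::complete_lattice) I"
  shows "chain_cover (mi_Delta::'a set) I"
proof -
  obtain C :: "'i \<Rightarrow> 'a set" and R and f :: "'a \<Rightarrow> 'i \<Rightarrow> 'a" where
    cc: "\<forall>i\<in>I. complete_chain (C i) (R i)" and inC: "\<forall>x. \<forall>i\<in>I. f x i \<in> C i"
    and inj: "\<forall>x y. (\<forall>i\<in>I. f x i = f y i) \<longrightarrow> x = y"
    and lub: "\<forall>S. \<forall>i\<in>I. is_lub_in (R i) (C i) ((\<lambda>x. f x i) ` S) (f (Sup S) i)"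
    using emb unfolding join_embeds_def by blast
  have mono: "(f x i, f y i) \<in> R i" if "x \<le> y" "i \<in> I" for x y i
  proof -
    have "Sup {x, y} = y" using that by (simp add: sup.absorb2)
    then show ?thesis using lub that unfolding is_lub_in_def by (metis image_insert insertI1)
  qed
  define cv where "cv m = (SOME ms. m < ms \<and> (\<forall>z. m < z \<longrightarrow> ms \<le> z))" for m :: 'a
  have cv: "m < cv m \<and> (\<forall>z. m < z \<longrightarrow> cv m \<le> z)" if "m \<in> mi_Delta" for m
  proof -
    have "\<exists>ms. m < ms \<and> (\<forall>z. m < z \<longrightarrow> ms \<le> z)" using that unfolding mi_Delta_def by blast
    then show ?thesis unfolding cv_def by (rule someI_ex)
  qed
  define sel where "sel m = (SOME i. i \<in> I \<and> f m i \<noteq> f (cv m) i)" for m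
  have sel: "sel m \<in> I \<and> f m (sel m) \<noteq> f (cv m) (sel m)" if "m \<in> mi_Delta" for m
  proof -
    have "m \<noteq> cv m" using cv[OF that] by auto
    then have "\<exists>i. i \<in> I \<and> f m i \<noteq> f (cv m) i" using inj by blast
    then show ?thesis unfolding sel_def by (rule someI_ex)
  qed
  define Ch where "Ch i = {m \<in> mi_Delta. sel m = i}" for i
  show ?thesis
    unfolding chain_cover_def
  proof (intro exI[of _ Ch] conjI ballI)
    show "mi_Delta = (\<Union>i\<in>I. Ch i)" unfolding Ch_def using sel by auto
    fix i assume i: "i \<in> I"
    show "Ch i \<subseteq> mi_Delta" unfolding Ch_def by auto
    show "Complete_Partial_Order.chain (\<le>) (Ch i)"
      unfolding Complete_Partial_Order.chain_def
    proof (intro ballI)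
      fix m1 m2 assume m1: "m1 \<in> Ch i" and m2: "m2 \<in> Ch i"
      show "m1 \<le> m2 \<or> m2 \<le> m1"
      proof (rule ccontr)
        assume nc: "\<not> (m1 \<le> m2 \<or> m2 \<le> m1)"
        have mi1: "m1 \<in> mi_Delta" "sel m1 = i" and mi2: "m2 \<in> mi_Delta" "sel m2 = i"
          using m1 m2 unfolding Ch_def by auto
        let ?u = "f (Sup {m1, m2}) i"
        have rf: "(f x i, f x i) \<in> R i" for x using mono[of x x i] i by simp
        have L: "is_lub_in (R i) (C i) ((\<lambda>x. f x i) ` {m1, m2}) ?u" using lub i by blast
        have ccR: "total_on (C i) (R i)" "antisym (R i)" "trans (R i)" "refl_on (C i) (R i)"
          using cc i unfolding complete_chain_def by auto
        have "m1 < Sup {m1, m2}" "m2 < Sup {m1, m2}" using nc by (auto simp: less_le_not_le)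
        then have le1: "cv m1 \<le> Sup {m1, m2}" and le2: "cv m2 \<le> Sup {m1, m2}"
          using cv mi1 mi2 by auto
        have "(f (cv m1) i, ?u) \<in> R i" "(f (cv m2) i, ?u) \<in> R i"
          using mono[OF le1 i] mono[OF le2 i] by auto
        moreover have "(f m1 i, f (cv m1) i) \<in> R i" "(f m2 i, f (cv m2) i) \<in> R i"
          using mono i cv mi1 mi2 by (auto simp: less_le)
        moreover have "f m1 i \<noteq> f (cv m1) i" "f m2 i \<noteq> f (cv m2) i" using sel[OF mi1(1)] sel[OF mi2(1)] mi1(2) mi2(2) by auto
        moreover have "(f m1 i, f m2 i) \<in> R i \<or> (f m2 i, f m1 i) \<in> R i"
          using ccR(1) inC i unfolding total_on_def refl_on_def by (metis ccR(4) refl_onD)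
        moreover have "(f m1 i, f m2 i) \<in> R i \<Longrightarrow> (?u, f m2 i) \<in> R i"
          using L inC i rf unfolding is_lub_in_def by auto
        moreover have "(f m2 i, f m1 i) \<in> R i \<Longrightarrow> (?u, f m1 i) \<in> R i"
          using L inC i rf unfolding is_lub_in_def by auto
        ultimately show False using ccR(2,3) unfolding antisym_def trans_def by metis
      qed
    qed
  qed
qed

definition valid_col :: "nat \<Rightarrow> 'a::order set \<Rightarrow> ('a \<Rightarrow> nat) \<Rightarrow> bool" where
  "valid_col k F c \<longleftrightarrow> (\<forall>x\<in>F. c x < k) \<and> (\<forall>x\<in>F. \<forall>y\<in>F. c x = c y \<longrightarrow> x \<le> y \<or> y \<le> x)"

definition anti :: "'a::order set \<Rightarrow> bool" where
  "anti A \<longleftrightarrow> (\<forall>x\<in>A. \<forall>y\<in>A. x \<le> y \<longrightarrow> x = y)"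

lemma valid_col_subset: "valid_col k F c \<Longrightarrow> G \<subseteq> F \<Longrightarrow> valid_col k G c"
  unfolding valid_col_def by blast

lemma valid_inj_anti: "valid_col k F c \<Longrightarrow> A \<subseteq> F \<Longrightarrow> anti A \<Longrightarrow> inj_on c A"
  unfolding valid_col_def anti_def inj_on_def by (metis subsetD)

lemma valid_anti_image:
  assumes "valid_col k F c" "A \<subseteq> F" "anti A" "finite A" "card A = k"
  shows "c ` A = {..<k}"
proof -
  have "c ` A \<subseteq> {..<k}" using assms(1,2) unfolding valid_col_def by auto
  moreover have "card (c ` A) = k" using valid_inj_anti[OF assms(1-3)] assms(5) by (simp add: card_image)
  ultimately show ?thesis by (intro card_seteq) auto
qed

lemma dilworth_fin:
  fixes P :: "'a::order set"
  assumes "finite P" "\<forall>A\<subseteq>P. anti A \<longrightarrow> card A \<le> k"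
  shows "\<exists>c. valid_col k P c"
  using assms
proof (induction "card P" arbitrary: P k rule: less_induct)
  case less
  note fin = less.prems(1) and wid = less.prems(2)
  show ?case
  proof (cases "P = {}")
    case True then show ?thesis unfolding valid_col_def by auto
  next
    case nonempty: False
    show ?thesis
    proof (cases "\<exists>A\<subseteq>P. anti A \<and> card A = k \<and> (\<exists>x\<in>P. \<forall>a\<in>A. \<not> a \<le> x) \<and> (\<exists>y\<in>P. \<forall>a\<in>A. \<not> y \<le> a)")
      case True
      then obtain A x0 y0 where A: "A \<subseteq> P" "anti A" "card A = k"
        and x0: "x0 \<in> P" "\<forall>a\<in>A. \<not> a \<le> x0" and y0: "y0 \<in> P" "\<forall>a\<in>A. \<not> y0 \<le> a" by blast
      have finA: "finite A" using finite_subset[OF A(1) fin] .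
      define Pp where "Pp = {x\<in>P. \<exists>a\<in>A. a \<le> x}"
      define Pm where "Pm = {x\<in>P. \<exists>a\<in>A. x \<le> a}"
      have "Pp \<subset> P" using x0 unfolding Pp_def by auto
      then have "card Pp < card P" using fin by (meson psubset_card_mono)
      moreover have "finite Pp" "\<forall>B\<subseteq>Pp. anti B \<longrightarrow> card B \<le> k"
        using fin wid unfolding Pp_def by auto
      ultimately obtain cp where cp: "valid_col k Pp cp" using less.hyps by blast
      have "Pm \<subset> P" using y0 unfolding Pm_def by auto
      then have "card Pm < card P" using fin by (meson psubset_card_mono)
      moreover have "finite Pm" "\<forall>B\<subseteq>Pm. anti B \<longrightarrow> card B \<le> k"
        using fin wid unfolding Pm_def by auto
      ultimately obtain cm where cm: "valid_col k Pm cm" using less.hyps by blast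
      have ApP: "A \<subseteq> Pp" "A \<subseteq> Pm" using A(1) unfolding Pp_def Pm_def by auto
      have imp: "cp ` A = {..<k}" using valid_anti_image[OF cp ApP(1) A(2) finA A(3)] .
      have imm: "cm ` A = {..<k}" using valid_anti_image[OF cm ApP(2) A(2) finA A(3)] .
      have injp: "inj_on cp A" using valid_inj_anti[OF cp ApP(1) A(2)] .
      have cover: "P = Pp \<union> Pm"
      proof (rule ccontr)
        assume "P \<noteq> Pp \<union> Pm"
        then obtain z where z: "z \<in> P" "\<forall>a\<in>A. \<not> a \<le> z \<and> \<not> z \<le> a"
          unfolding Pp_def Pm_def by auto
        have "z \<notin> A" using z by auto
        have "anti (insert z A)" using A(2) z unfolding anti_def by auto
        then have "card (insert z A) \<le> k" using wid z A(1) by auto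
        then show False using \<open>z \<notin> A\<close> finA A(3) by simp
      qed
      define ax where "ax x = (SOME a. a \<in> A \<and> cm a = cm x)" for x
      have ax: "ax x \<in> A \<and> cm (ax x) = cm x" if "x \<in> Pm" for x
      proof -
        have "cm x \<in> cm ` A" using imm cm that unfolding valid_col_def by auto
        then have "\<exists>a. a \<in> A \<and> cm a = cm x" by auto
        then show ?thesis unfolding ax_def by (rule someI_ex)
      qed
      have below: "x \<le> ax x" if "x \<in> Pm" "x \<notin> Pp" for x
      proof -
        have "x \<le> ax x \<or> ax x \<le> x" using cm ax[OF that(1)] ApP(2) that(1) unfolding valid_col_def by blast
        moreover have "\<not> ax x \<le> x" using that ax[OF that(1)] unfolding Pp_def Pm_def by auto
        ultimately show ?thesis by blast
      qed
      define c where "c x = (if x \<in> Pp then cp x else cp (ax x))" for x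
      have "valid_col k P c"
        unfolding valid_col_def
      proof (intro conjI ballI impI)
        fix x assume "x \<in> P"
        then show "c x < k" using cp ax cover ApP(1) unfolding c_def valid_col_def by auto
      next
        fix x y assume x: "x \<in> P" and y: "y \<in> P" and eq: "c x = c y"
        have gen: "v \<le> u" if u: "u \<in> Pp" and v: "v \<in> P" "v \<notin> Pp" and e: "cp u = cp (ax v)" for u v
        proof -
          have vm: "v \<in> Pm" using v cover by auto
          have "u \<le> ax v \<or> ax v \<le> u" using cp u ax[OF vm] ApP(1) e unfolding valid_col_def by blast
          then show ?thesis
          proof
            assume "u \<le> ax v"
            obtain a where a: "a \<in> A" "a \<le> u" using u unfolding Pp_def by auto
            then have "a = ax v" using A(2) ax[OF vm] \<open>u \<le> ax v\<close> unfolding anti_def by (meson order_trans)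
            then have "u = ax v" using a \<open>u \<le> ax v\<close> by auto
            then show ?thesis using below[OF vm v(2)] by simp
          next
            assume "ax v \<le> u" then show ?thesis using below[OF vm v(2)] by (rule order_trans[rotated])
          qed
        qed
        show "x \<le> y \<or> y \<le> x"
        proof (cases "x \<in> Pp"; cases "y \<in> Pp")
          assume "x \<in> Pp" "y \<in> Pp" then show ?thesis using cp eq unfolding c_def valid_col_def by auto
        next
          assume "x \<in> Pp" "y \<notin> Pp" then show ?thesis using gen[of x y] y eq unfolding c_def by auto
        next
          assume "x \<notin> Pp" "y \<in> Pp" then show ?thesis using gen[of y x] x eq unfolding c_def by auto
        next
          assume nx: "x \<notin> Pp" and ny: "y \<notin> Pp"
          have xm: "x \<in> Pm" and ym: "y \<in> Pm" using x y nx ny cover by auto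
          have "ax x = ax y" using injp ax[OF xm] ax[OF ym] eq nx ny unfolding c_def inj_on_def by auto
          then have "cm x = cm y" using ax[OF xm] ax[OF ym] by metis
          then show ?thesis using cm xm ym unfolding valid_col_def by blast
        qed
      qed
      then show ?thesis by blast
    next
      case False
      obtain x where x: "x \<in> P" "\<forall>b\<in>P. b \<le> x \<longrightarrow> x = b" using finite_has_minimal[OF fin nonempty] by blast
      obtain y where y: "y \<in> P" "x \<le> y" "\<forall>b\<in>P. y \<le> b \<longrightarrow> y = b"
      proof -
        obtain y where y: "y \<in> {z\<in>P. x \<le> z}" "\<forall>b\<in>{z\<in>P. x \<le> z}. y \<le> b \<longrightarrow> y = b"
          using finite_has_maximal[of "{z\<in>P. x \<le> z}"] fin x(1) by auto
        then show ?thesis using that by (auto intro: order_trans)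
      qed
      have "anti {x}" unfolding anti_def by auto
      then have k1: "1 \<le> k" using wid x(1) by (metis card.insert card.empty empty_subsetI finite.emptyI insert_subset empty_iff One_nat_def)
      define Q where "Q = P - {x, y}"
      have "card Q < card P" unfolding Q_def using fin x(1) by (intro psubset_card_mono) auto
      moreover have "finite Q" using fin unfolding Q_def by auto
      moreover have "\<forall>B\<subseteq>Q. anti B \<longrightarrow> card B \<le> k - 1"
      proof (intro allI impI)
        fix B assume B: "B \<subseteq> Q" "anti B"
        have BP: "B \<subseteq> P" using B unfolding Q_def by auto
        have cB: "card B \<le> k" using wid BP B(2) by auto
        show "card B \<le> k - 1"
        proof (rule ccontr)
          assume "\<not> card B \<le> k - 1"
          then have "card B = k" using cB by auto
          then have "(\<forall>z\<in>P. \<exists>a\<in>B. a \<le> z) \<or> (\<forall>z\<in>P. \<exists>a\<in>B. z \<le> a)" using False BP B(2) by blast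
          then show False
          proof
            assume "\<forall>z\<in>P. \<exists>a\<in>B. a \<le> z"
            then obtain a where "a \<in> B" "a \<le> x" using x(1) by blast
            then have "a = x" using x BP by auto
            then show False using \<open>a \<in> B\<close> B(1) unfolding Q_def by auto
          next
            assume "\<forall>z\<in>P. \<exists>a\<in>B. z \<le> a"
            then obtain a where "a \<in> B" "y \<le> a" using y(1) by blast
            then have "a = y" using y BP by auto
            then show False using \<open>a \<in> B\<close> B(1) unfolding Q_def by auto
          qed
        qed
      qed
      ultimately obtain c' where c': "valid_col (k - 1) Q c'" using less.hyps by blast
      define c where "c = c'(x := k - 1, y := k - 1)"
      have "valid_col k P c"
        unfolding valid_col_def
      proof (intro conjI ballI impI)
        fix z assume z: "z \<in> P"
        show "c z < k"
        proof (cases "z \<in> Q")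
          case True then have "c' z < k - 1" using c' unfolding valid_col_def by auto
          then show ?thesis using k1 True unfolding c_def Q_def by auto
        next
          case False then show ?thesis using k1 z unfolding c_def Q_def by auto
        qed
      next
        fix u v assume u: "u \<in> P" and v: "v \<in> P" and eq: "c u = c v"
        have lt: "c' z < k - 1" if "z \<in> Q" for z using c' that unfolding valid_col_def by auto
        show "u \<le> v \<or> v \<le> u"
        proof (cases "u \<in> Q"; cases "v \<in> Q")
          assume "u \<in> Q" "v \<in> Q"
          then show ?thesis using c' eq unfolding c_def valid_col_def Q_def by auto
        next
          assume "u \<in> Q" "v \<notin> Q"
          then show ?thesis using lt[of u] eq v unfolding c_def Q_def by (auto split: if_splits)
        next
          assume "u \<notin> Q" "v \<in> Q"
          then show ?thesis using lt[of v] eq u unfolding c_def Q_def by (auto split: if_splits)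
        next
          assume "u \<notin> Q" "v \<notin> Q"
          then show ?thesis using u v y(2) unfolding Q_def by auto
        qed
      qed
      then show ?thesis by blast
    qed
  qed
qed

definition resp :: "nat \<Rightarrow> ('a::order \<times> nat) set \<Rightarrow> 'a set \<Rightarrow> bool" where
  "resp k G F \<longleftrightarrow> (\<exists>c. valid_col k F c \<and> (\<forall>p\<in>G. fst p \<in> F \<longrightarrow> c (fst p) = snd p))"

lemma dilworth_inf:
  fixes P :: "'a::order set"
  assumes wid: "\<forall>A\<subseteq>P. finite A \<longrightarrow> anti A \<longrightarrow> card A \<le> k"
  shows "\<exists>c. valid_col k P c"
proof -
  have finv: "\<exists>c. valid_col k F c" if "finite F" "F \<subseteq> P" for F
  proof (rule dilworth_fin[OF that(1)], intro allI impI)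
    fix A assume AF: "A \<subseteq> F" "anti A"
    have fA: "finite A" using finite_subset[OF AF(1) that(1)] .
    have AP: "A \<subseteq> P" using AF(1) that(2) by (rule order_trans)
    show "card A \<le> k" using wid AP fA AF(2) by simp
  qed
  define S where "S = {G :: ('a \<times> nat) set. \<forall>F. finite F \<longrightarrow> F \<subseteq> P \<longrightarrow> resp k G F}"
  have SD: "resp k G F" if "G \<in> S" "finite F" "F \<subseteq> P" for G F
    using that unfolding S_def by blast
  have bound: "i < k" if "(x,i) \<in> G" "G \<in> S" "x \<in> P" for x i G
  proof -
    have "resp k G {x}" using SD[OF that(2)] that(3) by simp
    then obtain c where "valid_col k {x} c" "\<forall>p\<in>G. fst p \<in> {x} \<longrightarrow> c (fst p) = snd p"
      unfolding resp_def by blast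
    then show ?thesis using that(1) unfolding valid_col_def by force
  qed
  have "\<exists>M\<in>S. \<forall>X\<in>S. M \<subseteq> X \<longrightarrow> X = M"
  proof (rule Zorn_Lemma, intro ballI)
    fix C assume C: "C \<in> chains S"
    have CS: "C \<subseteq> S" using C unfolding chains_def by auto
    have "resp k (\<Union>C) F" if F: "finite F" "F \<subseteq> P" for F
    proof (cases "C = {}")
      case True then show ?thesis using finv[OF F] unfolding resp_def by auto
    next
      case False
      define T where "T = {p \<in> \<Union>C. fst p \<in> F}"
      have "T \<subseteq> F \<times> {..<k}"
      proof
        fix p assume p: "p \<in> T"
        then obtain G where "G \<in> C" "p \<in> G" "fst p \<in> F" unfolding T_def by auto
        then have "snd p < k" using bound[of "fst p" "snd p" G] CS F(2) by auto
        then show "p \<in> F \<times> {..<k}" using \<open>fst p \<in> F\<close> by (cases p) auto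
      qed
      then have "finite T" using F(1) by (meson finite_SigmaI finite_lessThan finite_subset)
      moreover have "T \<subseteq> \<Union>C" unfolding T_def by auto
      moreover have "subset.chain S C" using C by (simp add: chains_alt_def)
      ultimately obtain G where G: "G \<in> C" "T \<subseteq> G" using finite_subset_Union_chain False by metis
      then have "resp k G F" using CS F SD by blast
      then obtain c where c: "valid_col k F c" "\<forall>p\<in>G. fst p \<in> F \<longrightarrow> c (fst p) = snd p"
        unfolding resp_def by blast
      have "\<forall>p\<in>\<Union>C. fst p \<in> F \<longrightarrow> c (fst p) = snd p"
      proof (intro ballI impI)
        fix p assume "p \<in> \<Union>C" "fst p \<in> F"
        then have "p \<in> G" using G(2) unfolding T_def by auto
        then show "c (fst p) = snd p" using c(2) \<open>fst p \<in> F\<close> by auto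
      qed
      then show ?thesis using c(1) unfolding resp_def by blast
    qed
    then show "\<Union>C \<in> S" unfolding S_def by blast
  qed
  then obtain M where M: "M \<in> S" "\<forall>X\<in>S. M \<subseteq> X \<longrightarrow> X = M" by blast
  have tot: "\<exists>i. (x,i) \<in> M" if x: "x \<in> P" for x
  proof (rule ccontr)
    assume nx: "\<not> (\<exists>i. (x,i) \<in> M)"
    have "insert (x,i) M \<notin> S" for i
    proof
      assume "insert (x,i) M \<in> S"
      then have "insert (x,i) M = M" using M(2) subset_insertI by blast
      then show False using nx by blast
    qed
    then have "\<exists>F. finite F \<and> F \<subseteq> P \<and> \<not> resp k (insert (x,i) M) F" for i
      unfolding S_def by blast
    then obtain Fi where Fi: "\<And>i. finite (Fi i) \<and> Fi i \<subseteq> P \<and> \<not> resp k (insert (x,i) M) (Fi i)"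
      by metis
    define F where "F = insert x (\<Union>i<k. Fi i)"
    have "finite F" "F \<subseteq> P" unfolding F_def using Fi x by auto
    then have "resp k M F" using SD M(1) by blast
    then obtain c where c: "valid_col k F c" "\<forall>p\<in>M. fst p \<in> F \<longrightarrow> c (fst p) = snd p"
      unfolding resp_def by blast
    have ck: "c x < k" using c(1) unfolding valid_col_def F_def by auto
    have sub: "Fi (c x) \<subseteq> F" unfolding F_def using ck by auto
    have "valid_col k (Fi (c x)) c" using valid_col_subset[OF c(1) sub] .
    moreover have "\<forall>p\<in>insert (x, c x) M. fst p \<in> Fi (c x) \<longrightarrow> c (fst p) = snd p"
      using c(2) sub by auto
    ultimately have "resp k (insert (x, c x) M) (Fi (c x))" unfolding resp_def by blast
    then show False using Fi[of "c x"] by blast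
  qed
  define col where "col y = (SOME i. (y,i) \<in> M)" for y
  have colM: "(y, col y) \<in> M" if "y \<in> P" for y unfolding col_def using tot[OF that] by (rule someI_ex)
  have "valid_col k P col"
    unfolding valid_col_def
  proof (intro conjI ballI impI)
    fix x assume "x \<in> P" then show "col x < k" using bound colM M(1) by blast
  next
    fix x y assume xy: "x \<in> P" "y \<in> P" "col x = col y"
    have "resp k M {x,y}" using SD[OF M(1)] xy by simp
    then obtain c where c: "valid_col k {x,y} c" "\<forall>p\<in>M. fst p \<in> {x,y} \<longrightarrow> c (fst p) = snd p"
      unfolding resp_def by blast
    have "c x = col x" "c y = col y" using c(2) colM[OF xy(1)] colM[OF xy(2)] by force+
    then show "x \<le> y \<or> y \<le> x" using c(1) xy unfolding valid_col_def by auto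
  qed
  then show ?thesis by blast
qed

lemma min_card:
  fixes Q :: "'x set \<Rightarrow> bool"
  assumes "Q I0"
  shows "\<exists>I. Q I \<and> (\<forall>J. Q J \<longrightarrow> (card_of I, card_of J) \<in> ordLeq)"
proof -
  define W where "W = {r. \<exists>I. Q I \<and> r = card_of I}"
  have "card_of I0 \<in> W" using assms unfolding W_def by blast
  then obtain r where r: "r \<in> W" and rmin: "\<And>s. (s, r) \<in> ordLess \<Longrightarrow> s \<notin> W"
    using wfE_min[OF wf_ordLess] by blast
  obtain I where I: "Q I" "r = card_of I" using r unfolding W_def by blast
  have "(card_of I, card_of J) \<in> ordLeq" if "Q J" for J
  proof -
    have "card_of J \<in> W" using that unfolding W_def by blast
    then have "(card_of J, card_of I) \<notin> ordLess" using rmin I(2) by blast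
    then show ?thesis using ordLess_or_ordLeq[OF card_of_Well_order[of J] card_of_Well_order[of I]] by simp
  qed
  then show ?thesis using I(1) by blast
qed

lemma leq_fin:
  assumes "(card_of A, card_of B) \<in> ordLeq" "finite B"
  shows "finite A \<and> card A \<le> card B"
proof -
  have "\<exists>f. inj_on f A \<and> f ` A \<subseteq> B" using assms(1) card_of_ordLeq[of A B] by simp
  then obtain f where f: "inj_on f A" "f ` A \<subseteq> B" by blast
  have "finite A" using card_of_ordLeq_finite[OF assms] .
  moreover have "card A \<le> card B" using card_inj_on_le[OF f assms(2)] .
  ultimately show ?thesis by blast
qed

lemma fin_leq:
  assumes "finite A" "finite B" "card A \<le> card B"
  shows "(card_of A, card_of B) \<in> ordLeq"
  using card_le_inj[OF assms] card_of_ordLeq[symmetric] by blast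

lemma iso_fin:
  assumes "(card_of A, card_of B) \<in> ordIso" "finite B"
  shows "finite A \<and> card A = card B"
proof -
  have "(card_of A, card_of B) \<in> ordLeq" "(card_of B, card_of A) \<in> ordLeq" using assms(1) ordIso_iff_ordLeq by blast+
  then show ?thesis using leq_fin assms(2) by (metis le_antisym)
qed

lemma pigeon:
  fixes P :: "'a::order set" and J :: "'i set"
  assumes "chain_cover P J" "antichain_in P A"
  shows "(card_of A, card_of J) \<in> ordLeq"
proof -
  obtain Ch where Ch: "\<forall>j\<in>J. Ch j \<subseteq> P \<and> Complete_Partial_Order.chain (\<le>) (Ch j)" "P = (\<Union>j\<in>J. Ch j)"
    using assms(1) unfolding chain_cover_def by blast
  have AP: "A \<subseteq> P" and an: "\<forall>x\<in>A. \<forall>y\<in>A. x \<le> y \<longrightarrow> x = y" using assms(2) unfolding antichain_in_def by auto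
  define g where "g a = (SOME j. j \<in> J \<and> a \<in> Ch j)" for a
  have g: "g a \<in> J \<and> a \<in> Ch (g a)" if "a \<in> A" for a
  proof -
    have "\<exists>j. j \<in> J \<and> a \<in> Ch j" using AP that Ch(2) by blast
    then show ?thesis unfolding g_def by (rule someI_ex)
  qed
  have "inj_on g A"
  proof (rule inj_onI)
    fix a b assume ab: "a \<in> A" "b \<in> A" "g a = g b"
    then have "a \<in> Ch (g a)" "b \<in> Ch (g a)" "g a \<in> J" using g[OF ab(1)] g[OF ab(2)] by auto
    then have "a \<le> b \<or> b \<le> a" using Ch(1) unfolding Complete_Partial_Order.chain_def by blast
    then show "a = b" using an ab by auto
  qed
  moreover have "g ` A \<subseteq> J" using g by auto
  ultimately show ?thesis using card_of_ordLeq[symmetric] by blast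
qed

lemma col_cover:
  fixes P :: "'a::order set"
  assumes "valid_col k P c"
  shows "\<exists>R::'a set. finite R \<and> card R \<le> k \<and> chain_cover P R"
proof -
  define rep where "rep i = (SOME x. x \<in> P \<and> c x = i)" for i
  have rep: "rep i \<in> P \<and> c (rep i) = i" if "i \<in> c ` P" for i
  proof -
    have "\<exists>x. x \<in> P \<and> c x = i" using that by auto
    then show ?thesis unfolding rep_def by (rule someI_ex)
  qed
  define R where "R = rep ` (c ` P)"
  have sub: "c ` P \<subseteq> {..<k}" using assms unfolding valid_col_def by auto
  then have fin: "finite (c ` P)" by (rule finite_subset) simp
  have "card R \<le> card (c ` P)" unfolding R_def using fin by (rule card_image_le)
  also have "\<dots> \<le> k" using card_mono[OF _ sub] by simp
  finally have cR: "card R \<le> k" .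
  have "chain_cover P R"
    unfolding chain_cover_def
  proof (intro exI[of _ "\<lambda>r. {x \<in> P. c x = c r}"] conjI ballI)
    fix r assume "r \<in> R"
    show "{x \<in> P. c x = c r} \<subseteq> P" by auto
    show "Complete_Partial_Order.chain (\<le>) {x \<in> P. c x = c r}"
      using assms unfolding valid_col_def Complete_Partial_Order.chain_def by auto
  next
    show "P = (\<Union>r\<in>R. {x \<in> P. c x = c r})"
    proof
      show "P \<subseteq> (\<Union>r\<in>R. {x \<in> P. c x = c r})"
      proof
        fix x assume x: "x \<in> P"
        then have "rep (c x) \<in> R" "c (rep (c x)) = c x" using rep[of "c x"] unfolding R_def by auto
        then show "x \<in> (\<Union>r\<in>R. {x \<in> P. c x = c r})" using x by (intro UN_I[of "rep (c x)"]) auto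
      qed
    qed auto
  qed
  moreover have "finite R" unfolding R_def using fin by simp
  ultimately show ?thesis using cR by blast
qed

theorem corollary7p5:
  assumes "algebraic_lattice TYPE('a::complete_lattice)"
  shows "(\<exists>I::'a set. join_dim_is TYPE('a) I)
    \<and> (\<exists>J::'a set. cov_is (mi_Delta :: 'a set) J)
    \<and> (\<forall>I J. join_dim_is TYPE('a) I \<longrightarrow> cov_is (mi_Delta :: 'a set) J
              \<longrightarrow> (card_of I, card_of J) \<in> ordIso)
    \<and> (\<forall>n::nat. (\<exists>I. join_dim_is TYPE('a) I \<and> finite I \<and> card I = n)
        \<longleftrightarrow> ((\<exists>A. antichain_in (mi_Delta :: 'a set) A \<and> finite A \<and> card A = n)
             \<and> (\<forall>A. antichain_in (mi_Delta :: 'a set) A \<longrightarrow> finite A \<and> card A \<le> n)))"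
proof -
  have sep: "\<forall>x y::'a. \<not> x \<le> y \<longrightarrow> (\<exists>m\<in>mi_Delta. y \<le> m \<and> \<not> x \<le> m)"
    using separation[OF assms] by blast
  have E1: "join_embeds TYPE('a) J" if "chain_cover (mi_Delta::'a set) J" for J :: "'a set"
    using cover_embeds[OF sep that] .
  have E2: "chain_cover (mi_Delta::'a set) I" if "join_embeds TYPE('a) I" for I :: "'a set"
    using embeds_cover[OF that] .
  have C0: "chain_cover (mi_Delta::'a set) (mi_Delta::'a set)"
    unfolding chain_cover_def Complete_Partial_Order.chain_def
    by (intro exI[of _ "\<lambda>m. {m}"]) auto
  obtain I0 :: "'a set" where I0: "join_dim_is TYPE('a) I0"
    using min_card[of "join_embeds TYPE('a)", OF E1[OF C0]] unfolding join_dim_is_def by blast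
  obtain J0 :: "'a set" where J0: "cov_is (mi_Delta::'a set) J0"
    using min_card[of "chain_cover (mi_Delta::'a set)", OF C0] unfolding cov_is_def by blast
  have iso: "(card_of I, card_of J) \<in> ordIso" if "join_dim_is TYPE('a) I" "cov_is (mi_Delta :: 'a set) J" for I J :: "'a set"
  proof -
    have "(card_of J, card_of I) \<in> ordLeq" using that E2 unfolding join_dim_is_def cov_is_def by blast
    moreover have "(card_of I, card_of J) \<in> ordLeq" using that E1 unfolding join_dim_is_def cov_is_def by blast
    ultimately show ?thesis using ordIso_iff_ordLeq by blast
  qed
  have dil: "\<exists>R::'a set. finite R \<and> card R \<le> k \<and> chain_cover (mi_Delta::'a set) R"
    if "\<forall>A. antichain_in (mi_Delta :: 'a set) A \<longrightarrow> finite A \<and> card A \<le> k" for k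
  proof -
    have "\<forall>A\<subseteq>(mi_Delta :: 'a set). finite A \<longrightarrow> anti A \<longrightarrow> card A \<le> k"
      using that unfolding antichain_in_def anti_def by blast
    then obtain c where "valid_col k (mi_Delta :: 'a set) c" using dilworth_inf by blast
    then show ?thesis using col_cover by blast
  qed
  have fin_part: "(\<exists>I. join_dim_is TYPE('a) I \<and> finite I \<and> card I = n)
        \<longleftrightarrow> ((\<exists>A. antichain_in (mi_Delta :: 'a set) A \<and> finite A \<and> card A = n)
             \<and> (\<forall>A. antichain_in (mi_Delta :: 'a set) A \<longrightarrow> finite A \<and> card A \<le> n))" for n
  proof
    assume "\<exists>I. join_dim_is TYPE('a) I \<and> finite I \<and> card I = n"
    then obtain I where I: "join_dim_is TYPE('a) I" "finite I" "card I = n" by blast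
    have "(card_of J0, card_of I) \<in> ordIso" using iso[OF I(1) J0] ordIso_symmetric by blast
    then have J0f: "finite J0" "card J0 = n" using iso_fin I by auto
    have J0c: "chain_cover (mi_Delta::'a set) J0" using J0 unfolding cov_is_def by blast
    have all: "\<forall>A. antichain_in (mi_Delta :: 'a set) A \<longrightarrow> finite A \<and> card A \<le> n"
      using pigeon[OF J0c] leq_fin J0f by metis
    define W where "W = card ` {A. antichain_in (mi_Delta :: 'a set) A}"
    have "W \<subseteq> {..n}" using all unfolding W_def by auto
    then have fW: "finite W" by (rule finite_subset) simp
    have "antichain_in (mi_Delta :: 'a set) {}" unfolding antichain_in_def by auto
    then have "W \<noteq> {}" unfolding W_def by auto
    define w where "w = Max W"
    have "w \<in> W" unfolding w_def using fW \<open>W \<noteq> {}\<close> by simp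
    then obtain A0 where A0: "antichain_in (mi_Delta :: 'a set) A0" "card A0 = w" unfolding W_def by auto
    have wn: "w \<le> n" using all A0 by auto
    have "\<forall>A. antichain_in (mi_Delta :: 'a set) A \<longrightarrow> finite A \<and> card A \<le> w"
      using all fW unfolding w_def W_def by auto
    then obtain R :: "'a set" where R: "finite R" "card R \<le> w" "chain_cover (mi_Delta::'a set) R"
      using dil by blast
    have "(card_of J0, card_of R) \<in> ordLeq" using J0 R(3) unfolding cov_is_def by blast
    then have "card J0 \<le> card R" using leq_fin R(1) by blast
    then have "w = n" using wn R(2) J0f by auto
    then show "(\<exists>A. antichain_in (mi_Delta :: 'a set) A \<and> finite A \<and> card A = n)
             \<and> (\<forall>A. antichain_in (mi_Delta :: 'a set) A \<longrightarrow> finite A \<and> card A \<le> n)"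
      using A0 all by blast
  next
    assume H: "(\<exists>A. antichain_in (mi_Delta :: 'a set) A \<and> finite A \<and> card A = n)
             \<and> (\<forall>A. antichain_in (mi_Delta :: 'a set) A \<longrightarrow> finite A \<and> card A \<le> n)"
    then obtain A0 where A0: "antichain_in (mi_Delta :: 'a set) A0" "finite A0" "card A0 = n" by blast
    obtain R :: "'a set" where R: "finite R" "card R \<le> n" "chain_cover (mi_Delta::'a set) R"
      using dil H by blast
    have "(card_of J0, card_of R) \<in> ordLeq" using J0 R(3) unfolding cov_is_def by blast
    then have J0f: "finite J0" "card J0 \<le> n" using leq_fin R by fastforce+
    have J0c: "chain_cover (mi_Delta::'a set) J0" using J0 unfolding cov_is_def by blast
    have "card A0 \<le> card J0" using pigeon[OF J0c A0(1)] leq_fin J0f(1) by blast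
    then have "card J0 = n" using J0f A0(3) by auto
    moreover have "finite I0 \<and> card I0 = card J0" using iso_fin[OF iso[OF I0 J0] J0f(1)] .
    ultimately show "\<exists>I. join_dim_is TYPE('a) I \<and> finite I \<and> card I = n" using I0 by auto
  qed
  show ?thesis using I0 J0 iso fin_part by blast
qed

end
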